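(* Let $(p^\ast,q^\ast,\mathcal{M}^\ast)$ be an optimal solution of Problem 1, and let $(p_3^\ast,q_3^\ast)$ be an optimal solution of Problem 3 (i.e. $q_3^\ast=\alpha p_3^\ast$ and $p_3^\ast$ maximizes $p\mapsto R(p,\alpha p,\hat{\mathcal{M}}^\ast(p,\alpha p))$ over $p\in[0,1]$ with $\alpha p\in[0,1]$), both assumed to exist. Then $$R(p_3^\ast,q_3^\ast,\hat{\mathcal{M}}^\ast(p_3^\ast,q_3^\ast))\ \ge\ \Big(1-\frac1e\Big)R(p^\ast,q^\ast,\mathcal{M}^\ast).$$
   Context: Let $\mathcal{G}=(\mathcal{U},\mathcal{E})$ be a finite directed graph without self-loops, $\mathcal{U}=\{1,\dots,U\}$. For $u,v\in\mathcal{U}$, $D(u,v;\mathcal{G})$ denotes the number of edges of a shortest directed path from $u$ to $v$ in $\mathcal{G}$, with $D(u,v;\mathcal{G})=+\infty$ if there is no such path. For an integer $d\ge0$, the $d$-visible set of $u$ is $\mathcal{V}(u,d;\mathcal{G})=\{v\in\mathcal{U}: D(v,u;\mathcal{G})\le d\}$. Fix an integer social visibility threshold $\tau\ge1$. Let $\mathcal{R}\subseteq\mathcal{U}$ (requesters) and $\mathcal{S}\subseteq\mathcal{U}$ (suppliers) be disjoint. Each requester $u\in\mathcal{R}$ has a valuation $p_u\in[0,1]$ and each supplier $u\in\mathcal{S}$ has a valuation $q_u\in[0,1]$. Let $b$ be a positive integer (budget) and $\alpha\in(0,1)$. For $p\in[0,1]$ let $\widetilde{R}(p)=\{u\in\mathcal{R}: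 p_u\ge p\}$ and for $q\in[0,1]$ let $\widetilde{S}(q)=\{u\in\mathcal{S}: q_u\le q\}$. For $\mathcal{M}\subseteq\mathcal{S}$ let $\widetilde{G}(p,\mathcal{M})$ be the graph obtained from $\mathcal{G}$ by adding a directed edge from every $s\in\mathcal{M}$ to every $r\in\widetilde{R}(p)$. For $u\in\widetilde{R}(p)$ let $I_u(p,\mathcal{M})=|\mathcal{V}(u,\tau;\widetilde{G}(p,\mathcal{M}))\setminus\mathcal{V}(u,\tau;\mathcal{G})|$, and $I(p,\mathcal{M})=\sum_{u\in\widetilde{R}(p)}I_u(p,\mathcal{M})$. The revenue is $R(p,q,\mathcal{M})=p\,I(p,\mathcal{M})-q\,I(p,\mathcal{M})$. Problem 1: maximize $R(p,q,\mathcal{M})$ over $p,q\in[0,1]$ and $\mathcal{M}$ subject to $q=\alpha p$, $\mathcal{M}\subseteq\widetilde{S}(q)$, $|\mathcal{M}|\le b$. The greedy procedure \texttt{OptSupplierSet}$(p,q)$: start with $\mathcal{M}=\emptyset$; for $t=1,\dots,b$, pick $u^\ast\in\widetilde{S}(q)$ maximizing $R(p,q,\mathcal{M}\cup\{u\})-R(p,q,\mathcal{M})$ (ties broken arbitrarily) and set $\mathcal{M}\leftarrow\mathcal{M}\cup\{u^\ast\}$; output $\hat{\mathcal{M}}^\ast(p,q)=\mathcal{M}$. Problem 3: maximize $R(p,q,\hat{\mathcal{M}}^\ast(p,q))$ over $p,q\in[0,1]$ with $q=\alpha p$. *)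

theory Defs
  imports Complex_Main "HOL-Library.Extended_Nat"
begin

text \<open>Directed graph on the vertex set {1..U} given by its edge set E (pairs (a,b) = edge a to b).
  Walks of length k are encoded by the k-th relational power E ^^ k.\<close>

definition dist :: "(nat \<times> nat) set \<Rightarrow> nat \<Rightarrow> nat \<Rightarrow> enat" where
  "dist E u v = (if \<exists>k. (u, v) \<in> E ^^ k then enat (LEAST k. (u, v) \<in> E ^^ k) else \<infinity>)"

definition visible :: "nat \<Rightarrow> (nat \<times> nat) set \<Rightarrow> nat \<Rightarrow> nat \<Rightarrow> nat set" where
  "visible NU E u d = {v \<in> {1..NU}. dist E v u \<le> enat d}"

definition Rtil :: "nat set \<Rightarrow> (nat \<Rightarrow> real) \<Rightarrow> real \<Rightarrow> nat set" where
  "Rtil Req pv p = {u \<in> Req. pv u \<ge> p}"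

definition Stil :: "nat set \<Rightarrow> (nat \<Rightarrow> real) \<Rightarrow> real \<Rightarrow> nat set" where
  "Stil Supp qv q = {u \<in> Supp. qv u \<le> q}"

definition aug_graph :: "(nat \<times> nat) set \<Rightarrow> nat set \<Rightarrow> (nat \<Rightarrow> real) \<Rightarrow> real \<Rightarrow> nat set
    \<Rightarrow> (nat \<times> nat) set" where
  "aug_graph E Req pv p M = E \<union> (M \<times> Rtil Req pv p)"

definition infl :: "nat \<Rightarrow> (nat \<times> nat) set \<Rightarrow> nat \<Rightarrow> nat set \<Rightarrow> (nat \<Rightarrow> real) \<Rightarrow> real
    \<Rightarrow> nat set \<Rightarrow> real" where
  "infl NU E \<tau> Req pv p M =
     (\<Sum>u\<in>Rtil Req pv p. real (card (visible NU (aug_graph E Req pv p M) u \<tau> - visible NU E u \<tau>)))"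

definition revenue :: "nat \<Rightarrow> (nat \<times> nat) set \<Rightarrow> nat \<Rightarrow> nat set \<Rightarrow> (nat \<Rightarrow> real)
    \<Rightarrow> real \<Rightarrow> real \<Rightarrow> nat set \<Rightarrow> real" where
  "revenue NU E \<tau> Req pv p q M = p * infl NU E \<tau> Req pv p M - q * infl NU E \<tau> Req pv p M"

text \<open>M is a possible output of the greedy procedure OptSupplierSet(p,q) (for some tie-breaking).
  If the candidate set is empty, nothing can be picked and M stays unchanged.\<close>
definition greedy_output :: "nat \<Rightarrow> (nat \<times> nat) set \<Rightarrow> nat \<Rightarrow> nat set \<Rightarrow> nat set
    \<Rightarrow> (nat \<Rightarrow> real) \<Rightarrow> (nat \<Rightarrow> real) \<Rightarrow> nat \<Rightarrow> real \<Rightarrow> real \<Rightarrow> nat set \<Rightarrow> bool" where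
  "greedy_output NU E \<tau> Req Supp pv qv b p q M \<longleftrightarrow>
     (\<exists>Ms :: nat \<Rightarrow> nat set. Ms 0 = {} \<and> M = Ms b \<and>
        (\<forall>t<b. (Stil Supp qv q = {} \<longrightarrow> Ms (Suc t) = Ms t) \<and>
               (Stil Supp qv q \<noteq> {} \<longrightarrow>
                  (\<exists>u\<in>Stil Supp qv q. Ms (Suc t) = Ms t \<union> {u} \<and>
                     (\<forall>w\<in>Stil Supp qv q.
                        revenue NU E \<tau> Req pv p q (Ms t \<union> {w}) - revenue NU E \<tau> Req pv p q (Ms t)
                        \<le> revenue NU E \<tau> Req pv p q (Ms t \<union> {u}) - revenue NU E \<tau> Req pv p q (Ms t))))))"

end

theory Submission
  imports Defs
begin

lemma dist_le_iff: "dist E v u \<le> enat d \<longleftrightarrow> (\<exists>k\<le>d. (v,u) \<in> E^^k)"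
proof (cases "\<exists>k. (v, u) \<in> E ^^ k")
  case True
  show ?thesis
  proof
    assume "dist E v u \<le> enat d"
    with True have "(LEAST k. (v, u) \<in> E ^^ k) \<le> d" by (simp add: dist_def)
    moreover have "(v,u) \<in> E ^^ (LEAST k. (v, u) \<in> E ^^ k)" using True by (metis LeastI)
    ultimately show "\<exists>k\<le>d. (v,u) \<in> E^^k" by blast
  next
    assume "\<exists>k\<le>d. (v,u) \<in> E^^k"
    then obtain k where "k \<le> d" "(v,u) \<in> E^^k" by blast
    then have "(LEAST k. (v, u) \<in> E ^^ k) \<le> d" by (meson Least_le order_trans)
    with True show "dist E v u \<le> enat d" by (simp add: dist_def)
  qed
next
  case False
  then show ?thesis by (simp add: dist_def)
qed

lemma relpow_mono_rel: "(A::('a\<times>'a) set) \<subseteq> B \<Longrightarrow> (x,y) \<in> A^^k \<Longrightarrow> (x,y) \<in> B^^k"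
proof (induction k arbitrary: y)
  case 0 then show ?case by (metis relpow_0_E relpow_0_I)
next
  case (Suc k)
  from Suc.prems(2) obtain z where "(x,z) \<in> A^^k" "(z,y) \<in> A" by (rule relpow_Suc_E)
  then show ?case using Suc.IH[OF Suc.prems(1)] Suc.prems(1) by (blast intro: relpow_Suc_I)
qed

lemma walk_decomp:
  "(v,u) \<in> ((E::(nat\<times>nat) set) \<union> M \<times> R)^^k \<Longrightarrow> (v,u) \<in> E^^k \<or>
     (\<exists>s\<in>M. \<exists>r\<in>R. \<exists>i j. i+1+j \<le> k \<and> (v,s)\<in>E^^i \<and> (r,u)\<in>E^^j)"
proof (induction k arbitrary: u)
  case 0
  then have "v = u" by (metis relpow_0_E)
  then have "(v,u) \<in> E^^0" by (simp add: relpow_0_I)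
  then show ?case by (rule disjI1)
next
  case (Suc k)
  from Suc.prems obtain w where w1: "(v,w) \<in> (E \<union> M \<times> R)^^k" and w2: "(w,u) \<in> E \<union> M \<times> R"
    by (rule relpow_Suc_E)
  have uu: "(u,u) \<in> E^^0" by (rule relpow_0_I)
  from Suc.IH[OF w1] show ?case
  proof
    assume h: "(v,w) \<in> E^^k"
    show ?case
    proof (cases "(w,u) \<in> E")
      case True then have "(v,u) \<in> E^^Suc k" using h by (rule relpow_Suc_I[rotated])
      then show ?thesis by (rule disjI1)
    next
      case False
      then have "w \<in> M" "u \<in> R" using w2 by auto
      moreover have "k+1+0 \<le> Suc k" by simp
      ultimately show ?thesis using h uu by (intro disjI2 bexI[of _ w] bexI[of _ u] exI[of _ k] exI[of _ 0] conjI)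
    qed
  next
    assume "\<exists>s\<in>M. \<exists>r\<in>R. \<exists>i j. i+1+j \<le> k \<and> (v,s)\<in>E^^i \<and> (r,w)\<in>E^^j"
    then obtain s r i j where h: "s\<in>M" "r\<in>R" "i+1+j \<le> k" "(v,s)\<in>E^^i" "(r,w)\<in>E^^j" by blast
    show ?case
    proof (cases "(w,u) \<in> E")
      case True
      then have "(r,u) \<in> E^^Suc j" using h(5) by (rule relpow_Suc_I[rotated])
      moreover have "i+1+Suc j \<le> Suc k" using h(3) by simp
      ultimately show ?thesis using h by (intro disjI2 bexI[of _ s] bexI[of _ r] exI[of _ i] exI[of _ "Suc j"] conjI)
    next
      case False
      then have "u \<in> R" using w2 by auto
      moreover have "i+1+0 \<le> Suc k" using h(3) by simp
      ultimately show ?thesis using h uu by (intro disjI2 bexI[of _ s] bexI[of _ u] exI[of _ i] exI[of _ 0] conjI)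
    qed
  qed
qed

lemma walk_comp:
  assumes "s\<in>M" "r\<in>R" "(v,s)\<in>(E::(nat\<times>nat) set)^^i" "(r,u)\<in>E^^j"
  shows "(v,u) \<in> (E \<union> M \<times> R)^^(i+1+j)"
proof -
  have a: "(v,s) \<in> (E \<union> M \<times> R)^^i" using assms(3) by (rule relpow_mono_rel[rotated]) auto
  have b: "(r,u) \<in> (E \<union> M \<times> R)^^j" using assms(4) by (rule relpow_mono_rel[rotated]) auto
  have "(s,r) \<in> E \<union> M \<times> R" using assms(1,2) by blast
  then have "(v,r) \<in> (E \<union> M \<times> R)^^(Suc i)" using a by (rule relpow_Suc_I[rotated])
  then have "(v,u) \<in> (E \<union> M \<times> R)^^(Suc i + j)" using b by (rule relpow_trans)
  then show ?thesis by simp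
qed

definition Bset :: "nat \<Rightarrow> (nat \<times> nat) set \<Rightarrow> nat \<Rightarrow> nat set \<Rightarrow> nat \<Rightarrow> nat \<Rightarrow> nat set" where
  "Bset NU E \<tau> R u s = {v\<in>{1..NU}. \<exists>r\<in>R. \<exists>i j. i+1+j \<le> \<tau> \<and> (v,s)\<in>E^^i \<and> (r,u)\<in>E^^j}
      - visible NU E u \<tau>"

lemma vis_diff:
  "visible NU (aug_graph E Req pv p M) u \<tau> - visible NU E u \<tau> = (\<Union>s\<in>M. Bset NU E \<tau> (Rtil Req pv p) u s)"
proof -
  let ?R = "Rtil Req pv p"
  have "v \<in> visible NU (aug_graph E Req pv p M) u \<tau> - visible NU E u \<tau> \<longleftrightarrow> v \<in> (\<Union>s\<in>M. Bset NU E \<tau> ?R u s)" for v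
  proof
    assume h: "v \<in> visible NU (aug_graph E Req pv p M) u \<tau> - visible NU E u \<tau>"
    then obtain k where k: "k \<le> \<tau>" "(v,u) \<in> (E \<union> M \<times> ?R)^^k" "v \<in> {1..NU}"
      by (auto simp: visible_def aug_graph_def dist_le_iff)
    have "(v,u) \<notin> E^^k" using h k by (auto simp: visible_def dist_le_iff)
    with walk_decomp[OF k(2)] k h show "v \<in> (\<Union>s\<in>M. Bset NU E \<tau> ?R u s)"
      by (auto simp: Bset_def) (meson order_trans)
  next
    assume "v \<in> (\<Union>s\<in>M. Bset NU E \<tau> ?R u s)"
    then obtain s r i j where h: "s\<in>M" "r\<in>?R" "i+1+j \<le> \<tau>" "(v,s)\<in>E^^i" "(r,u)\<in>E^^j" "v\<in>{1..NU}"
      "v \<notin> visible NU E u \<tau>"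
      by (auto simp: Bset_def)
    have "(v,u) \<in> (E \<union> M \<times> ?R)^^(i+1+j)" using walk_comp[OF h(1,2,4,5)] .
    then have "\<exists>k\<le>\<tau>. (v,u) \<in> (E \<union> M \<times> ?R)^^k" using h(3) by (intro exI[of _ "i+1+j"]) simp
    then have "v \<in> visible NU (aug_graph E Req pv p M) u \<tau>" using h(6)
      unfolding visible_def aug_graph_def dist_le_iff by blast
    with h(7) show "v \<in> visible NU (aug_graph E Req pv p M) u \<tau> - visible NU E u \<tau>" by blast
  qed
  then show ?thesis by blast
qed

lemma infl_eq: "infl NU E \<tau> Req pv p M =
   (\<Sum>u\<in>Rtil Req pv p. real (card (\<Union>s\<in>M. Bset NU E \<tau> (Rtil Req pv p) u s)))"
  unfolding infl_def vis_diff ..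


lemma card_un_diff:
  assumes "finite C" "finite D"
  shows "real (card (C \<union> D)) - real (card C) = real (card (D - C))"
proof -
  have "C \<union> D = C \<union> (D - C)" by blast
  moreover have "card (C \<union> (D - C)) = card C + card (D - C)"
    using assms by (intro card_Un_disjoint) auto
  ultimately have "card (C \<union> D) = card C + card (D - C)" by simp
  then show ?thesis by simp
qed

lemma cov_mono:
  fixes B :: "nat \<Rightarrow> nat \<Rightarrow> nat set"
  assumes BK: "\<And>u s. B u s \<subseteq> K" and fK: "finite K" and XY: "X \<subseteq> Y"
  shows "(\<Sum>u\<in>U. real (card (\<Union>s\<in>X. B u s))) \<le> (\<Sum>u\<in>U. real (card (\<Union>s\<in>Y. B u s)))"
proof (rule sum_mono)
  fix u
  have "(\<Union>s\<in>Y. B u s) \<subseteq> K" using BK by blast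
  then have "finite (\<Union>s\<in>Y. B u s)" using fK finite_subset by blast
  moreover have "(\<Union>s\<in>X. B u s) \<subseteq> (\<Union>s\<in>Y. B u s)" using XY by blast
  ultimately show "real (card (\<Union>s\<in>X. B u s)) \<le> real (card (\<Union>s\<in>Y. B u s))"
    by (simp add: card_mono)
qed

lemma cov_sub:
  fixes B :: "nat \<Rightarrow> nat \<Rightarrow> nat set"
  assumes BK: "\<And>u s. B u s \<subseteq> K" and fK: "finite K" and fOs: "finite Os"
  shows "(\<Sum>u\<in>U. real (card (\<Union>s\<in>X \<union> Os. B u s))) - (\<Sum>u\<in>U. real (card (\<Union>s\<in>X. B u s)))
     \<le> (\<Sum>z\<in>Os. (\<Sum>u\<in>U. real (card (\<Union>s\<in>X \<union> {z}. B u s))) - (\<Sum>u\<in>U. real (card (\<Union>s\<in>X. B u s))))"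
proof -
  have fin: "finite (\<Union>s\<in>Z. B u s)" for Z u
  proof -
    have "(\<Union>s\<in>Z. B u s) \<subseteq> K" using BK by blast
    then show ?thesis using fK finite_subset by blast
  qed
  have finB: "finite (B u s)" for u s using BK fK finite_subset by blast
  have per: "real (card (\<Union>s\<in>X \<union> Os. B u s)) - real (card (\<Union>s\<in>X. B u s))
      \<le> (\<Sum>z\<in>Os. real (card (\<Union>s\<in>X \<union> {z}. B u s)) - real (card (\<Union>s\<in>X. B u s)))" for u
  proof -
    let ?C = "\<Union>s\<in>X. B u s"
    have e1: "(\<Union>s\<in>X \<union> Os. B u s) = ?C \<union> (\<Union>z\<in>Os. B u z)" by blast
    have e2: "(\<Union>s\<in>X \<union> {z}. B u s) = ?C \<union> B u z" for z by blast
    have "real (card (\<Union>s\<in>X \<union> Os. B u s)) - real (card ?C) = real (card ((\<Union>z\<in>Os. B u z) - ?C))"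
      unfolding e1 by (rule card_un_diff[OF fin]) (use fOs finB in auto)
    also have "(\<Union>z\<in>Os. B u z) - ?C = (\<Union>z\<in>Os. B u z - ?C)" by blast
    also have "real (card (\<Union>z\<in>Os. B u z - ?C)) \<le> real (\<Sum>z\<in>Os. card (B u z - ?C))"
      using card_UN_le[OF fOs, of "\<lambda>z. B u z - ?C"] by linarith
    also have "\<dots> = (\<Sum>z\<in>Os. real (card (B u z - ?C)))" by simp
    also have "\<dots> = (\<Sum>z\<in>Os. real (card (\<Union>s\<in>X \<union> {z}. B u s)) - real (card ?C))"
      by (rule sum.cong[OF refl]) (simp only: e2 card_un_diff[OF fin finB])
    finally show ?thesis .
  qed
  have "(\<Sum>u\<in>U. real (card (\<Union>s\<in>X \<union> Os. B u s))) - (\<Sum>u\<in>U. real (card (\<Union>s\<in>X. B u s)))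
     = (\<Sum>u\<in>U. real (card (\<Union>s\<in>X \<union> Os. B u s)) - real (card (\<Union>s\<in>X. B u s)))"
    by (simp add: sum_subtractf)
  also have "\<dots> \<le> (\<Sum>u\<in>U. \<Sum>z\<in>Os. real (card (\<Union>s\<in>X \<union> {z}. B u s)) - real (card (\<Union>s\<in>X. B u s)))"
    by (rule sum_mono) (rule per)
  also have "\<dots> = (\<Sum>z\<in>Os. \<Sum>u\<in>U. real (card (\<Union>s\<in>X \<union> {z}. B u s)) - real (card (\<Union>s\<in>X. B u s)))"
    by (rule sum.swap)
  also have "\<dots> = (\<Sum>z\<in>Os. (\<Sum>u\<in>U. real (card (\<Union>s\<in>X \<union> {z}. B u s))) - (\<Sum>u\<in>U. real (card (\<Union>s\<in>X. B u s))))"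
    by (simp add: sum_subtractf)
  finally show ?thesis .
qed

lemma greedy_bound:
  fixes f :: "nat set \<Rightarrow> real" and Ms :: "nat \<Rightarrow> nat set"
  assumes mono: "\<And>X Y. X \<subseteq> Y \<Longrightarrow> f X \<le> f Y"
    and sub: "\<And>X Os. finite Os \<Longrightarrow> f (X \<union> Os) - f X \<le> (\<Sum>z\<in>Os. f (X \<union> {z}) - f X)"
    and f0: "f {} = 0" and Ms0: "Ms 0 = {}"
    and step: "\<And>t. t < b \<Longrightarrow> \<exists>u\<in>S. Ms (Suc t) = Ms t \<union> {u} \<and>
                 (\<forall>w\<in>S. f (Ms t \<union> {w}) - f (Ms t) \<le> f (Ms t \<union> {u}) - f (Ms t))"
    and OS: "OPT \<subseteq> S" and fOs: "finite OPT" and cO: "card OPT \<le> b" and bpos: "b > 0"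
  shows "(1 - 1 / exp 1) * f OPT \<le> f (Ms b)"
proof -
  define c where "c = 1 - 1 / real b"
  have bge: "real b \<ge> 1" using bpos by simp
  have c0: "0 \<le> c" unfolding c_def using bge by (simp add: field_simps)
  have key: "f OPT - f (Ms (Suc t)) \<le> c * (f OPT - f (Ms t))" if tb: "t < b" for t
  proof -
    obtain u where u: "u \<in> S" "Ms (Suc t) = Ms t \<union> {u}"
      "\<forall>w\<in>S. f (Ms t \<union> {w}) - f (Ms t) \<le> f (Ms t \<union> {u}) - f (Ms t)"
      using step[OF tb] by blast
    define g where "g = f (Ms (Suc t)) - f (Ms t)"
    have g0: "g \<ge> 0" unfolding g_def u(2) using mono[of "Ms t" "Ms t \<union> {u}"] by auto
    have "f OPT \<le> f (Ms t \<union> OPT)" by (rule mono) blast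
    moreover have "f (Ms t \<union> OPT) - f (Ms t) \<le> (\<Sum>z\<in>OPT. f (Ms t \<union> {z}) - f (Ms t))"
      by (rule sub[OF fOs])
    moreover have "(\<Sum>z\<in>OPT. f (Ms t \<union> {z}) - f (Ms t)) \<le> (\<Sum>z\<in>OPT. g)"
      by (rule sum_mono) (use u OS in \<open>auto simp: g_def\<close>)
    moreover have "(\<Sum>z\<in>OPT. g) = real (card OPT) * g" by simp
    moreover have "real (card OPT) * g \<le> real b * g"
      using cO g0 by (intro mult_right_mono) auto
    ultimately have D: "f OPT - f (Ms t) \<le> real b * g" by linarith
    have "c * (f OPT - f (Ms t)) = (f OPT - f (Ms t)) - (f OPT - f (Ms t)) / real b"
      unfolding c_def by (simp add: algebra_simps diff_divide_distrib)
    moreover have "(f OPT - f (Ms t)) / real b \<le> g"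
      using D bge by (simp add: divide_le_eq mult.commute)
    ultimately show ?thesis unfolding g_def by linarith
  qed
  have fO0: "f OPT \<ge> 0" using mono[of "{}" OPT] f0 by simp
  have ind: "t \<le> b \<Longrightarrow> f OPT - f (Ms t) \<le> c ^ t * f OPT" for t
  proof (induction t)
    case 0 then show ?case using Ms0 f0 by simp
  next
    case (Suc t)
    then have "f OPT - f (Ms t) \<le> c ^ t * f OPT" by simp
    then have "c * (f OPT - f (Ms t)) \<le> c * (c ^ t * f OPT)" using c0 by (rule mult_left_mono)
    moreover have "f OPT - f (Ms (Suc t)) \<le> c * (f OPT - f (Ms t))" using Suc.prems key by simp
    ultimately show ?case by simp
  qed
  have "c \<le> exp (- 1 / real b)"
    unfolding c_def using exp_ge_add_one_self[of "- 1 / real b"] by simp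
  then have "c ^ b \<le> exp (- 1 / real b) ^ b" using c0 by (rule power_mono)
  also have "\<dots> = exp (real b * (- 1 / real b))" by (rule exp_of_nat_mult[symmetric])
  also have "\<dots> = 1 / exp 1" using bpos by (simp add: exp_minus inverse_eq_divide)
  finally have cb: "c ^ b \<le> 1 / exp 1" .
  have "f OPT - f (Ms b) \<le> c ^ b * f OPT" using ind by simp
  also have "\<dots> \<le> 1 / exp 1 * f OPT" using cb fO0 by (rule mult_right_mono)
  finally show ?thesis by (simp add: algebra_simps)
qed

theorem theorem4:
  fixes NU :: nat and E :: "(nat \<times> nat) set" and \<tau> b :: nat
    and Req Supp :: "nat set" and pv qv :: "nat \<Rightarrow> real" and \<alpha> :: real
    and Mhat :: "real \<Rightarrow> real \<Rightarrow> nat set"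
    and pst qst p3 q3 :: real and Mst :: "nat set"
  assumes E_sub: "E \<subseteq> {1..NU} \<times> {1..NU}"
    and no_loops: "\<forall>v. (v, v) \<notin> E"
    and tau: "\<tau> \<ge> 1"
    and Req_sub: "Req \<subseteq> {1..NU}" and Sup_sub: "Supp \<subseteq> {1..NU}"
    and disj: "Req \<inter> Supp = {}"
    and pv_range: "\<forall>u\<in>Req. 0 \<le> pv u \<and> pv u \<le> 1"
    and qv_range: "\<forall>u\<in>Supp. 0 \<le> qv u \<and> qv u \<le> 1"
    and b_pos: "b > 0"
    and alpha: "0 < \<alpha>" "\<alpha> < 1"
    \<comment> \<open>(pst, qst, Mst) is an optimal solution of Problem 1\<close>
    and opt1_feas: "pst \<in> {0..1}" "qst \<in> {0..1}" "qst = \<alpha> * pst"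
                   "Mst \<subseteq> Stil Supp qv qst" "card Mst \<le> b"
    and opt1_max: "\<forall>p q M. p \<in> {0..1} \<and> q \<in> {0..1} \<and> q = \<alpha> * p \<and> M \<subseteq> Stil Supp qv q \<and> card M \<le> b
                    \<longrightarrow> revenue NU E \<tau> Req pv p q M \<le> revenue NU E \<tau> Req pv pst qst Mst"
    \<comment> \<open>Mhat p q is the output of OptSupplierSet(p,q) under some fixed tie-breaking\<close>
    and Mhat_greedy: "\<forall>p q. p \<in> {0..1} \<and> q \<in> {0..1} \<longrightarrow> greedy_output NU E \<tau> Req Supp pv qv b p q (Mhat p q)"
    \<comment> \<open>(p3, q3) is an optimal solution of Problem 3\<close>
    and opt3_feas: "p3 \<in> {0..1}" "q3 \<in> {0..1}" "q3 = \<alpha> * p3"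
    and opt3_max: "\<forall>p q. p \<in> {0..1} \<and> q \<in> {0..1} \<and> q = \<alpha> * p
                    \<longrightarrow> revenue NU E \<tau> Req pv p q (Mhat p q) \<le> revenue NU E \<tau> Req pv p3 q3 (Mhat p3 q3)"
  shows "revenue NU E \<tau> Req pv p3 q3 (Mhat p3 q3) \<ge> (1 - 1 / exp 1) * revenue NU E \<tau> Req pv pst qst Mst"
proof -
  let ?R = "Rtil Req pv pst"
  let ?B = "Bset NU E \<tau> ?R"
  define F where "F M = (\<Sum>u\<in>?R. real (card (\<Union>s\<in>M. ?B u s)))" for M
  define f where "f = revenue NU E \<tau> Req pv pst qst"
  have fF: "f M = (pst - qst) * F M" for M
    unfolding f_def F_def revenue_def infl_eq by (simp add: algebra_simps)
  have c0: "pst - qst \<ge> 0"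
  proof -
    have "\<alpha> * pst \<le> 1 * pst" using opt1_feas(1) alpha by (intro mult_right_mono) auto
    then show ?thesis using opt1_feas(3) by simp
  qed
  have BK: "?B u s \<subseteq> {1..NU}" for u s by (auto simp: Bset_def)
  have mono: "f X \<le> f Y" if "X \<subseteq> Y" for X Y
  proof -
    have "F X \<le> F Y" unfolding F_def by (rule cov_mono[OF BK _ that]) simp
    then show ?thesis unfolding fF using c0 by (rule mult_left_mono)
  qed
  have sub: "f (X \<union> Os) - f X \<le> (\<Sum>z\<in>Os. f (X \<union> {z}) - f X)" if "finite Os" for X Os
  proof -
    have "F (X \<union> Os) - F X \<le> (\<Sum>z\<in>Os. F (X \<union> {z}) - F X)"
      unfolding F_def by (rule cov_sub[OF BK _ that]) simp
    then have "(pst - qst) * (F (X \<union> Os) - F X) \<le> (pst - qst) * (\<Sum>z\<in>Os. F (X \<union> {z}) - F X)"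
      using c0 by (rule mult_left_mono)
    then show ?thesis unfolding fF by (simp add: sum_distrib_left right_diff_distrib)
  qed
  have f0: "f {} = 0" unfolding fF F_def by simp
  have main: "(1 - 1 / exp 1) * f Mst \<le> f (Mhat pst qst)"
  proof (cases "Stil Supp qv qst = {}")
    case True
    then have "Mst = {}" using opt1_feas(4) by blast
    moreover have "f {} \<le> f (Mhat pst qst)" by (rule mono) blast
    ultimately show ?thesis using f0 by simp
  next
    case False
    have "greedy_output NU E \<tau> Req Supp pv qv b pst qst (Mhat pst qst)"
      using Mhat_greedy opt1_feas(1,2) by simp
    then obtain Ms where Ms: "Ms 0 = {}" "Mhat pst qst = Ms b"
      "\<forall>t<b. (Stil Supp qv qst = {} \<longrightarrow> Ms (Suc t) = Ms t) \<and>
               (Stil Supp qv qst \<noteq> {} \<longrightarrow>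
                  (\<exists>u\<in>Stil Supp qv qst. Ms (Suc t) = Ms t \<union> {u} \<and>
                     (\<forall>w\<in>Stil Supp qv qst.
                        revenue NU E \<tau> Req pv pst qst (Ms t \<union> {w}) - revenue NU E \<tau> Req pv pst qst (Ms t)
                        \<le> revenue NU E \<tau> Req pv pst qst (Ms t \<union> {u}) - revenue NU E \<tau> Req pv pst qst (Ms t))))"
      unfolding greedy_output_def by (elim exE conjE) (rule that)
    have step: "\<exists>u\<in>Stil Supp qv qst. Ms (Suc t) = Ms t \<union> {u} \<and>
                 (\<forall>w\<in>Stil Supp qv qst. f (Ms t \<union> {w}) - f (Ms t) \<le> f (Ms t \<union> {u}) - f (Ms t))"
      if "t < b" for t
      using Ms(3) that False unfolding f_def by simp
    have finM: "finite Mst"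
    proof (rule finite_subset)
      show "Mst \<subseteq> {1..NU}" using opt1_feas(4) Sup_sub by (auto simp: Stil_def)
    qed simp
    have "(1 - 1 / exp 1) * f Mst \<le> f (Ms b)"
      by (rule greedy_bound[where S = "Stil Supp qv qst" and f = f and Ms = Ms and b = b,
            OF mono sub f0 Ms(1) step opt1_feas(4) finM opt1_feas(5) b_pos])
    then show ?thesis using Ms(2) by simp
  qed
  have "f (Mhat pst qst) \<le> revenue NU E \<tau> Req pv p3 q3 (Mhat p3 q3)"
    unfolding f_def using spec[OF spec[OF opt3_max, of pst], of qst] opt1_feas(1,2,3) by simp
  with main show ?thesis unfolding f_def by linarith
qed

end
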